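(* Let $r_1<r_2$ be positive rational numbers such that neither $r_1$ nor $r_2$ is an integer and the open interval $(r_1,r_2)$ contains no integer. Let $w:=\lfloor r_1\rfloor$, $\epsilon_1:=r_1-w$, $\epsilon_2:=r_2-w$ (so $0<\epsilon_1<\epsilon_2<1$). Let $$d^*:=\min\{d\in\mathbb{Z}_{\ge1}:\ \exists m\in\mathbb{Z},\ r_1<m/d<r_2\},\qquad d_1:=\min\{e\in\mathbb{Z}_{\ge1}:\ (e/\epsilon_2,\,e/\epsilon_1)\cap\mathbb{Z}\neq\emptyset\}.$$ Then both minima exist, $d_1$ is the smallest positive integer denominator of a rational number in the interval $(1/\epsilon_2,1/\epsilon_1)$, and $$d^*=\left\lfloor \frac{d_1}{\epsilon_2}\right\rfloor+1,$$ i.e. $d^*=\lceil d_1/\epsilon_2\rceil$ if $d_1/\epsilon_2\notin\mathbb{Z}$ and $d^*=d_1/\epsilon_2+1$ if $d_1/\epsilon_2\in\mathbb{Z}$. *)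

theory Defs
  imports Complex_Main
begin

definition dstar :: "rat \<Rightarrow> rat \<Rightarrow> nat" where
  "dstar r1 r2 = (LEAST d::nat. d \<ge> 1 \<and>
      (\<exists>m::int. r1 < of_int m / of_nat d \<and> of_int m / of_nat d < r2))"

definition dfirst :: "rat \<Rightarrow> rat \<Rightarrow> nat" where
  "dfirst eps1 eps2 = (LEAST e::nat. e \<ge> 1 \<and>
      (\<exists>n::int. of_nat e / eps2 < of_int n \<and> of_int n < of_nat e / eps1))"

end

theory Submission
  imports Defs
begin

lemma P_shift:
  fixes r1 r2 :: rat and w :: int and d :: nat
  assumes "d \<ge> 1"
  shows "(\<exists>m::int. r1 < of_int m / of_nat d \<and> of_int m / of_nat d < r2) \<longleftrightarrow>
         (\<exists>m::int. (r1 - of_int w) * of_nat d < of_int m \<and> of_int m < (r2 - of_int w) * of_nat d)"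
proof
  have dp: "(0::rat) < of_nat d" using assms by simp
  assume "\<exists>m::int. r1 < of_int m / of_nat d \<and> of_int m / of_nat d < r2"
  then obtain m::int where "r1 < of_int m / of_nat d" "of_int m / of_nat d < r2" by blast
  hence "r1 * of_nat d < of_int m" "of_int m < r2 * of_nat d" using dp by (simp_all add: field_simps)
  hence "(r1 - of_int w) * of_nat d < of_int (m - w * int d) \<and> of_int (m - w * int d) < (r2 - of_int w) * of_nat d"
    by (simp add: algebra_simps)
  thus "\<exists>m::int. (r1 - of_int w) * of_nat d < of_int m \<and> of_int m < (r2 - of_int w) * of_nat d" by blast
next
  have dp: "(0::rat) < of_nat d" using assms by simp
  assume "\<exists>m::int. (r1 - of_int w) * of_nat d < of_int m \<and> of_int m < (r2 - of_int w) * of_nat d"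
  then obtain m::int where h: "(r1 - of_int w) * of_nat d < of_int m" "of_int m < (r2 - of_int w) * of_nat d" by blast
  hence "r1 * of_nat d < of_int (m + w * int d)" "of_int (m + w * int d) < r2 * of_nat d"
    by (simp_all add: algebra_simps)
  hence "r1 < of_int (m + w * int d) / of_nat d \<and> of_int (m + w * int d) / of_nat d < r2"
    using dp by (simp add: field_simps)
  thus "\<exists>m::int. r1 < of_int m / of_nat d \<and> of_int m / of_nat d < r2" by blast
qed

theorem mainTheorem5:
  fixes r1 r2 :: rat
  assumes "0 < r1" and "r1 < r2"
    and "r1 \<notin> \<int>" and "r2 \<notin> \<int>"
    and "\<forall>k::int. \<not> (r1 < of_int k \<and> of_int k < r2)"
  defines "w \<equiv> \<lfloor>r1\<rfloor>"
  defines "eps1 \<equiv> r1 - of_int w"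
  defines "eps2 \<equiv> r2 - of_int w"
  shows "0 < eps1 \<and> eps1 < eps2 \<and> eps2 < 1
    \<and> (\<exists>d::nat. d \<ge> 1 \<and> (\<exists>m::int. r1 < of_int m / of_nat d \<and> of_int m / of_nat d < r2))
    \<and> (\<exists>e::nat. e \<ge> 1 \<and> (\<exists>n::int. of_nat e / eps2 < of_int n \<and> of_int n < of_nat e / eps1))
    \<and> int (dfirst eps1 eps2) = (LEAST k::int. \<exists>q::rat. 1 / eps2 < q \<and> q < 1 / eps1
                                            \<and> k = snd (quotient_of q))
    \<and> int (dstar r1 r2) = \<lfloor>of_nat (dfirst eps1 eps2) / eps2\<rfloor> + 1
    \<and> (of_nat (dfirst eps1 eps2) / eps2 \<notin> \<int> \<longrightarrow>
         int (dstar r1 r2) = \<lceil>of_nat (dfirst eps1 eps2) / eps2\<rceil>)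
    \<and> (of_nat (dfirst eps1 eps2) / eps2 \<in> \<int> \<longrightarrow>
         of_nat (dstar r1 r2) = of_nat (dfirst eps1 eps2) / eps2 + 1)"
proof -
  have wle: "of_int w \<le> r1" unfolding w_def by (rule of_int_floor_le)
  have wne: "of_int w \<noteq> r1" using assms(3) by (metis Ints_of_int)
  have e1: "0 < eps1" using wle wne unfolding eps1_def by simp
  have e12: "eps1 < eps2" using assms(2) unfolding eps1_def eps2_def by simp
  have r1lt: "r1 < of_int (w + 1)" unfolding w_def using floor_correct[of r1] by simp
  have "\<not> r2 > of_int (w + 1)" using assms(5) r1lt by blast
  moreover have "r2 \<noteq> of_int (w + 1)" using assms(4) by (metis Ints_of_int)
  ultimately have e2: "eps2 < 1" unfolding eps2_def by simp
  define a where "a = eps1"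
  define b where "b = eps2"
  have a0: "0 < a" and ab: "a < b" and b1: "b < 1" using e1 e12 e2 a_def b_def by auto
  define P where "P d = (d \<ge> 1 \<and> (\<exists>m::int. r1 < of_int m / of_nat d \<and> of_int m / of_nat d < r2))" for d :: nat
  define Q where "Q e = (e \<ge> 1 \<and> (\<exists>n::int. of_nat e / b < of_int n \<and> of_int n < of_nat e / a))" for e :: nat
  have Pi: "P d \<longleftrightarrow> d \<ge> 1 \<and> (\<exists>m::int. a * of_nat d < of_int m \<and> of_int m < b * of_nat d)" for d
    unfolding P_def a_def b_def eps1_def eps2_def using P_shift by blast
  have Qi: "Q e \<longleftrightarrow> e \<ge> 1 \<and> (\<exists>n::int. a * of_int n < of_nat e \<and> of_nat e < b * of_int n)" for e
  proof -
    have "of_nat e / b < of_int n \<longleftrightarrow> of_nat e < b * of_int n" for n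
      using ab a0 by (simp add: field_simps)
    moreover have "of_int n < of_nat e / a \<longleftrightarrow> a * of_int n < of_nat e" for n
      using a0 by (simp add: field_simps)
    ultimately show ?thesis unfolding Q_def by auto
  qed
  obtain N :: nat where N: "1 / (b - a) < of_nat N" using reals_Archimedean2 by blast
  define d0 where "d0 = N + 1"
  have d0g: "1 < (b - a) * of_nat d0"
  proof -
    have "1 / (b - a) < of_nat d0" using N unfolding d0_def by simp
    thus ?thesis using ab by (simp add: field_simps)
  qed
  define m0 where "m0 = \<lfloor>a * of_nat d0\<rfloor> + 1"
  have "a * of_nat d0 < of_int m0" unfolding m0_def using floor_correct[of "a * of_nat d0"] by simp
  moreover have "of_int m0 < b * of_nat d0"
  proof -
    have "of_int m0 \<le> a * of_nat d0 + 1" unfolding m0_def using floor_correct[of "a * of_nat d0"] by simp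
    thus ?thesis using d0g by (simp add: algebra_simps)
  qed
  ultimately have Pd0: "P d0" unfolding Pi d0_def by auto
  hence exP: "\<exists>d. P d" by blast
  have Pds: "P (dstar r1 r2)" unfolding dstar_def P_def[symmetric] by (rule LeastI_ex[OF exP])
  have Pmin: "P d \<Longrightarrow> dstar r1 r2 \<le> d" for d unfolding dstar_def P_def[symmetric] by (rule Least_le)
  have PQ: "P d \<Longrightarrow> \<exists>m. Q m \<and> a * of_nat d < of_nat m \<and> of_nat m < b * of_nat d" for d
  proof -
    assume "P d"
    then obtain m :: int where d1: "d \<ge> 1" and m: "a * of_nat d < of_int m" "of_int m < b * of_nat d"
      unfolding Pi by blast
    have "0 < a * of_nat d" using a0 d1 by simp
    hence mp: "m > 0" using m(1) by linarith
    have "of_nat (nat m) = (of_int m :: rat)" using mp by simp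
    hence "Q (nat m)" unfolding Qi using m mp by (intro conjI exI[of _ "int d"]) (auto simp: mult.commute)
    thus ?thesis using m \<open>of_nat (nat m) = (of_int m :: rat)\<close> by auto
  qed
  obtain e0 where "Q e0" using PQ[OF Pd0] by blast
  hence exQ: "\<exists>e. Q e" by blast
  have dfq: "dfirst eps1 eps2 = (LEAST e. Q e)" unfolding dfirst_def Q_def a_def b_def by simp
  have Qdf: "Q (dfirst eps1 eps2)" unfolding dfq by (rule LeastI_ex[OF exQ])
  have Qmin: "Q e \<Longrightarrow> dfirst eps1 eps2 \<le> e" for e unfolding dfq by (rule Least_le)
  define D where "D = dstar r1 r2"
  define E where "E = dfirst eps1 eps2"
  define x where "x = of_nat E / b"
  have b0: "0 < b" using a0 ab by simp
  have st1: "\<lfloor>x\<rfloor> + 1 \<le> int D"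
  proof -
    obtain m where m: "Q m" "of_nat m < b * of_nat D" using PQ[OF Pds] unfolding D_def by blast
    have "E \<le> m" using Qmin[OF m(1)] unfolding E_def .
    hence "(of_nat E::rat) \<le> of_nat m" by simp
    hence "of_nat E < b * of_nat D" using m(2) by linarith
    hence "x < of_nat D" unfolding x_def using b0 by (simp add: field_simps)
    hence "\<lfloor>x\<rfloor> < int D" by (simp add: floor_less_iff)
    thus ?thesis by simp
  qed
  have st2: "int D \<le> \<lfloor>x\<rfloor> + 1"
  proof -
    obtain n :: int where n: "a * of_int n < of_nat E" "of_nat E < b * of_int n"
      using Qdf unfolding Qi E_def by blast
    define n0 where "n0 = \<lfloor>x\<rfloor> + 1"
    have x0: "0 \<le> x" unfolding x_def using b0 by simp
    have n01: "n0 \<ge> 1" unfolding n0_def using x0 by simp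
    have xn0: "x < of_int n0" unfolding n0_def using floor_correct[of x] by simp
    have "x < of_int n" unfolding x_def using n(2) b0 by (simp add: field_simps)
    hence "\<lfloor>x\<rfloor> < n" by (simp add: floor_less_iff)
    hence nn: "n0 \<le> n" unfolding n0_def by simp
    have c1: "of_nat E < b * of_int n0" using xn0 b0 unfolding x_def by (simp add: field_simps)
    have "a * of_int n0 \<le> a * of_int n" using nn a0 by simp
    hence c2: "a * of_int n0 < of_nat E" using n(1) by linarith
    have cn: "(of_nat (nat n0) :: rat) = of_int n0" using n01 by simp
    have "P (nat n0)" unfolding Pi cn using n01 c1 c2
      by (intro conjI exI[of _ "int E"]) auto
    hence "D \<le> nat n0" using Pmin unfolding D_def by blast
    thus ?thesis unfolding n0_def using n01 n0_def by linarith
  qed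
  have main: "int D = \<lfloor>x\<rfloor> + 1" using st1 st2 by simp
  have E1: "E \<ge> 1" using Qdf unfolding Q_def E_def by simp
  have lower: "int E \<le> k" if hk: "\<exists>q::rat. 1 / b < q \<and> q < 1 / a \<and> k = snd (quotient_of q)" for k
  proof -
    obtain q where q: "1 / b < q" "q < 1 / a" "k = snd (quotient_of q)" using hk by blast
    obtain p where pk: "quotient_of q = (p, k)" using q(3) by (metis prod.collapse)
    have k0: "k > 0" using quotient_of_denom_pos[OF pk] .
    have qq: "q = of_int p / of_int k" using quotient_of_div[OF pk] .
    have kp: "(0::rat) < of_int k" using k0 by simp
    have c1: "of_int k < b * of_int p" using q(1) kp b0 unfolding qq by (simp add: field_simps)
    have c2: "a * of_int p < of_int k" using q(2) kp a0 unfolding qq by (simp add: field_simps)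
    have cn: "(of_nat (nat k) :: rat) = of_int k" using k0 by simp
    have "Q (nat k)" unfolding Qi cn using k0 c1 c2 by (intro conjI exI[of _ p]) auto
    hence "E \<le> nat k" using Qmin unfolding E_def by blast
    thus ?thesis using k0 by linarith
  qed
  have memb: "\<exists>q::rat. 1 / b < q \<and> q < 1 / a \<and> int E = snd (quotient_of q)"
  proof -
    obtain n :: int where n: "a * of_int n < of_nat E" "of_nat E < b * of_int n"
      using Qdf unfolding Qi E_def by blast
    define q where "q = (of_int n / of_nat E :: rat)"
    have Ep: "(0::rat) < of_nat E" using E1 by simp
    have q1: "1 / b < q" unfolding q_def using n(2) Ep b0 by (simp add: field_simps)
    have q2: "q < 1 / a" unfolding q_def using n(1) Ep a0 by (simp add: field_simps)
    obtain p k where pk: "quotient_of q = (p, k)" by (metis prod.collapse)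
    have k0: "k > 0" using quotient_of_denom_pos[OF pk] .
    have lk: "int E \<le> k" using lower[of k] q1 q2 pk by (metis snd_conv)
    have qq: "q = of_int p / of_int k" using quotient_of_div[OF pk] .
    have "of_int p / of_int k = (of_int n / of_int (int E) :: rat)" using qq q_def by simp
    hence "of_int (p * int E) = (of_int (n * k) :: rat)" using k0 E1 by (simp add: field_simps)
    hence eq: "p * int E = n * k" by (simp only: of_int_eq_iff)
    have cop: "coprime k p" using quotient_of_coprime[OF pk] by (simp add: coprime_commute)
    have "k dvd p * int E" using eq by simp
    hence "k dvd int E" using cop coprime_dvd_mult_right_iff by blast
    hence "k \<le> int E" using E1 by (simp add: zdvd_imp_le)
    hence "int E = k" using lk by simp
    thus ?thesis using q1 q2 pk by (metis snd_conv)
  qed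
  have leastq: "int E = (LEAST k::int. \<exists>q::rat. 1 / b < q \<and> q < 1 / a \<and> k = snd (quotient_of q))"
    by (rule Least_equality[symmetric]) (use memb lower in auto)
  have Qe0': "\<exists>e::nat. e \<ge> 1 \<and> (\<exists>n::int. of_nat e / eps2 < of_int n \<and> of_int n < of_nat e / eps1)"
    using \<open>Q e0\<close> unfolding Q_def a_def b_def by blast
  have Pd0': "\<exists>d::nat. d \<ge> 1 \<and> (\<exists>m::int. r1 < of_int m / of_nat d \<and> of_int m / of_nat d < r2)"
    using Pd0 unfolding P_def by blast
  have c3: "x \<notin> \<int> \<longrightarrow> int D = \<lceil>x\<rceil>"
  proof
    assume "x \<notin> \<int>"
    hence "\<lceil>x\<rceil> = \<lfloor>x\<rfloor> + 1" by (metis ceiling_altdef Ints_of_int)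
    thus "int D = \<lceil>x\<rceil>" using main by simp
  qed
  have c4: "x \<in> \<int> \<longrightarrow> of_nat D = x + 1"
  proof
    assume "x \<in> \<int>"
    then obtain z where z: "x = of_int z" by (auto elim: Ints_cases)
    have "int D = z + 1" using main z by simp
    hence "(of_int (int D) :: rat) = of_int z + 1" by simp
    thus "of_nat D = x + 1" using z by simp
  qed
  show ?thesis
    using e1 e12 e2 Pd0' Qe0' leastq main c3 c4
    unfolding D_def E_def x_def a_def b_def by simp
qed
end
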